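(* Let $S$ be a finite training set of examples $(\mathbf{x},y)$ with $\mathbf{x}\in[-1,1]^d$, $y\in\{1,\dots,k\}$. Let $F,\bar F\subseteq\{1,\dots,d\}$ with $\bar F\setminus F\neq\emptyset$, and let $$W\in\arg\min_{V:\,\mathrm{supp}(V)\subseteq F}L(V),\qquad W^\star\in\arg\min_{V:\,\mathrm{supp}(V)\subseteq\bar F}L(V)$$ (both minimizers assumed to exist). Let $j\in\arg\max_{i\in\{1,\dots,d\}}\|\nabla_iL(W)\|_1$. If $L(W)>L(W^\star)$, then $$L(W)-\inf_{\mathbf{u}\in\mathbb{R}^k}L(W+\mathbf{u}\,\mathbf{e}_j^\top)\;\ge\;\frac{\big(L(W)-L(W^\star)\big)^2}{4\Big(\sum_{i\in\bar F\setminus F}\|W^\star_{\cdot,i}\|_\infty\Big)^2}.$$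
   Context: For $V\in\mathbb{R}^{k\times d}$, $V_{\cdot,i}$ is its $i$-th column and $\mathrm{supp}(V)=\{i: V_{\cdot,i}\neq0\}$. The loss of $W$ on $(\mathbf{x},y)$ is $\ell(W,(\mathbf{x},y))=\ln\sum_{y'\in\{1,\dots,k\}}\exp\big(\mathbf{1}[y'\neq y]-(W\mathbf{x})_y+(W\mathbf{x})_{y'}\big)$, and $L(W)=\frac1{|S|}\sum_{(\mathbf{x},y)\in S}\ell(W,(\mathbf{x},y))$. $\nabla_iL(W)\in\mathbb{R}^k$ denotes the $i$-th column of the gradient matrix $\nabla L(W)$, and $\mathbf{e}_j\in\mathbb{R}^d$ is the $j$-th standard basis vector. *)

theory Defs
  imports "HOL-Analysis.Analysis" "HOL-Library.Multiset"
begin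

(* Weight matrices W \<in> R^{k x d}: rows indexed by the finite label type 'k,
   columns by the finite feature type 'd. An example is (x, y) with x \<in> R^d, y a label. *)

definition loss :: "real^'d^'k \<Rightarrow> ((real^'d) \<times> 'k) \<Rightarrow> real" where
  "loss W e = (case e of (x, y) \<Rightarrow>
      ln (\<Sum>y'\<in>UNIV. exp ((if y' \<noteq> y then 1 else 0) - (W *v x) $ y + (W *v x) $ y')))"

(* empirical loss over the training set S (a finite multiset, duplicates allowed) *)
definition emp_loss :: "((real^'d) \<times> 'k) multiset \<Rightarrow> real^'d^'k \<Rightarrow> real" where
  "emp_loss S W = (\<Sum>e\<in>#S. loss W e) / real (size S)"

definition col :: "real^'d^'k \<Rightarrow> 'd \<Rightarrow> real^'k" where
  "col V i = (\<chi> r. V $ r $ i)"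

definition supp :: "real^'d^'k \<Rightarrow> 'd set" where
  "supp V = {i. col V i \<noteq> 0}"

(* gradient matrix of a differentiable function on matrices (Frobenius inner product) *)
definition grad :: "(real^'d^'k \<Rightarrow> real) \<Rightarrow> real^'d^'k \<Rightarrow> real^'d^'k" where
  "grad f W = (THE D. GDERIV f W :> D)"

definition norm1 :: "real^'k \<Rightarrow> real" where
  "norm1 v = (\<Sum>r\<in>UNIV. \<bar>v $ r\<bar>)"

definition norminf :: "real^'k \<Rightarrow> real" where
  "norminf v = Max (range (\<lambda>r. \<bar>v $ r\<bar>))"

(* u e_j^T : the k x d matrix whose j-th column is u and all other columns are zero *)
definition outer_e :: "real^'k \<Rightarrow> 'd \<Rightarrow> real^'d^'k" where
  "outer_e u j = (\<chi> r i. if i = j then u $ r else 0)"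

end

theory Submission imports Defs begin

lemma gderiv_unique:
  fixes f :: "'a::real_inner \<Rightarrow> real"
  assumes "GDERIV f x :> D" "GDERIV f x :> E" shows "D = E"
proof -
  have "(\<lambda>h. inner h D) = (\<lambda>h. inner h E)"
    using has_derivative_unique assms unfolding gderiv_def by blast
  then have "inner (D - E) D = inner (D - E) E" by metis
  then have "inner (D - E) (D - E) = 0" by (simp add: inner_diff_right)
  then show ?thesis by simp
qed

lemma grad_eq: "GDERIV f W :> D \<Longrightarrow> grad f W = D"
  unfolding grad_def using gderiv_unique by blast

lemma GDERIV_inner: "GDERIV (\<lambda>h. inner h D) x :> D"
  unfolding gderiv_def by (intro bounded_linear_imp_has_derivative bounded_linear_inner_left)

lemma GDERIV_sum:
  assumes "finite I" "\<And>i. i \<in> I \<Longrightarrow> GDERIV (f i) x :> D i"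
  shows "GDERIV (\<lambda>x. \<Sum>i\<in>I. f i x) x :> (\<Sum>i\<in>I. D i)"
  using assms unfolding gderiv_def inner_sum_right by (intro has_derivative_sum) auto

lemma GDERIV_sum_mset:
  assumes "\<And>e. e \<in># S \<Longrightarrow> GDERIV (f e) x :> D e"
  shows "GDERIV (\<lambda>x. \<Sum>e\<in>#S. f e x) x :> (\<Sum>e\<in>#S. D e)"
  using assms
proof (induction S)
  case empty
  then show ?case by (simp add: GDERIV_const)
next
  case (add a S)
  then show ?case by (simp add: GDERIV_add)
qed

lemma GDERIV_div:
  assumes "GDERIV f x :> D" shows "GDERIV (\<lambda>x. f x / c) x :> D /\<^sub>R c"
  using assms unfolding gderiv_def
  by (auto intro!: derivative_eq_intros simp: divide_inverse_commute inner_commute)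

lemma mv_lin: "((V::real^'d^'k) *v x) $ r = inner V (\<chi> r' i. if r' = r then x $ i else 0)"
proof -
  have "\<And>i. (\<Sum>ia\<in>UNIV. V $ i $ ia * (if i = r then x $ ia else 0)) = (if i = r then (\<Sum>ia\<in>UNIV. V $ r $ ia * x $ ia) else 0)"
    by auto
  then show ?thesis by (simp add: matrix_vector_mult_def inner_vec_def)
qed

lemma loss_gderiv: fixes e :: "(real^'d::finite) \<times> 'k::finite" and W :: "real^'d^'k" shows "\<exists>D. GDERIV (\<lambda>V. loss V e) W :> D"
proof -
  obtain x y where e: "e = (x, y)" by force
  define a where "a = (\<lambda>(V::real^'d^'k) y'. (if y' \<noteq> y then 1 else 0) - (V *v x) $ y + (V *v x) $ y')"
  have ga: "GDERIV (\<lambda>V. a V y') W :> ((\<chi> r' i. if r' = y' then x $ i else 0) - (\<chi> r' i. if r' = y then x $ i else 0))" for y'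
    unfolding a_def mv_lin
    by (rule GDERIV_subst[OF GDERIV_add[OF GDERIV_diff[OF GDERIV_const GDERIV_inner] GDERIV_inner]]) simp
  have ge: "GDERIV (\<lambda>V. exp (a V y')) W :> exp (a W y') *\<^sub>R ((\<chi> r' i. if r' = y' then x $ i else 0) - (\<chi> r' i. if r' = y then x $ i else 0))" for y'
    by (rule GDERIV_DERIV_compose[OF ga]) (rule DERIV_exp)
  have pos: "(\<Sum>y'\<in>UNIV. exp (a W y')) > 0"
    by (intro sum_pos) auto
  have gs: "GDERIV (\<lambda>V. \<Sum>y'\<in>UNIV. exp (a V y')) W :> (\<Sum>y'\<in>UNIV. exp (a W y') *\<^sub>R ((\<chi> r' i. if r' = y' then x $ i else 0) - (\<chi> r' i. if r' = y then x $ i else 0)))"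
    by (intro GDERIV_sum ge) auto
  from GDERIV_DERIV_compose[OF gs DERIV_ln[OF pos]]
  have "\<exists>D. GDERIV (\<lambda>V. ln (\<Sum>y'\<in>UNIV. exp (a V y'))) W :> D" by blast
  then show ?thesis unfolding e loss_def a_def by auto
qed

lemma emp_gderiv: "\<exists>D. GDERIV (emp_loss S) W :> D"
proof -
  have "\<forall>e. \<exists>D. GDERIV (\<lambda>V. loss V e) W :> D" using loss_gderiv by blast
  then obtain D where D: "\<And>e. GDERIV (\<lambda>V. loss V e) W :> D e" by metis
  from GDERIV_div[OF GDERIV_sum_mset[of S "\<lambda>e V. loss V e" W D, OF D], of "real (size S)"]
  have "\<exists>D. GDERIV (\<lambda>V. (\<Sum>e\<in>#S. loss V e) / real (size S)) W :> D" by blast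
  then show ?thesis unfolding emp_loss_def[abs_def] by blast
qed

lemma lse_convex:
  fixes a b :: "'i \<Rightarrow> real"
  assumes I: "finite I" "I \<noteq> {}" and t: "0 \<le> t" "t \<le> 1"
  shows "ln (\<Sum>i\<in>I. exp ((1 - t) * a i + t * b i))
         \<le> (1 - t) * ln (\<Sum>i\<in>I. exp (a i)) + t * ln (\<Sum>i\<in>I. exp (b i))"
proof -
  define A where "A = (\<Sum>i\<in>I. exp (a i))"
  define B where "B = (\<Sum>i\<in>I. exp (b i))"
  have A: "A > 0" unfolding A_def using I by (intro sum_pos) auto
  have B: "B > 0" unfolding B_def using I by (intro sum_pos) auto
  define M where "M = (1 - t) * ln A + t * ln B"
  have pt: "exp ((1 - t) * a i + t * b i) * exp (- M) \<le> (1 - t) * (exp (a i) / A) + t * (exp (b i) / B)" for i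
  proof -
    have "exp ((1 - t) * a i + t * b i) * exp (- M) = exp ((1 - t) * (a i - ln A) + t * (b i - ln B))"
      unfolding M_def by (simp add: exp_add[symmetric] algebra_simps)
    also have "\<dots> \<le> (1 - t) * exp (a i - ln A) + t * exp (b i - ln B)"
      using convex_onD[OF exp_convex, of t "a i - ln A" "b i - ln B"] t by simp
    also have "\<dots> = (1 - t) * (exp (a i) / A) + t * (exp (b i) / B)"
      using A B by (simp add: exp_diff)
    finally show ?thesis .
  qed
  have "(\<Sum>i\<in>I. exp ((1 - t) * a i + t * b i)) * exp (- M)
        \<le> (\<Sum>i\<in>I. (1 - t) * (exp (a i) / A) + t * (exp (b i) / B))"
    unfolding sum_distrib_right by (intro sum_mono pt)
  also have "\<dots> = (1 - t) * ((\<Sum>i\<in>I. exp (a i)) / A) + t * ((\<Sum>i\<in>I. exp (b i)) / B)"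
    by (simp add: sum.distrib sum_distrib_left[symmetric] sum_divide_distrib[symmetric])
  also have "\<dots> = (1 - t) * (A / A) + t * (B / B)"
    by (simp add: A_def B_def)
  also have "\<dots> = 1" using A B by simp
  finally have "(\<Sum>i\<in>I. exp ((1 - t) * a i + t * b i)) \<le> exp M"
    by (simp add: exp_minus field_simps)
  moreover have "(\<Sum>i\<in>I. exp ((1 - t) * a i + t * b i)) > 0" using I by (intro sum_pos) auto
  ultimately have "ln (\<Sum>i\<in>I. exp ((1 - t) * a i + t * b i)) \<le> M"
    by (metis ln_exp ln_le_cancel_iff exp_gt_zero)
  then show ?thesis unfolding M_def A_def B_def .
qed

lemma mv_lin2: "(((l::real) *\<^sub>R (A::real^'d::finite^'k::finite) + m *\<^sub>R B) *v x) $ r = l * (A *v x) $ r + m * (B *v x) $ r"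
  unfolding mv_lin by (simp add: inner_add_left)

lemma loss_convex:
  fixes A B :: "real^'d::finite^'k::finite"
  assumes t: "0 \<le> t" "t \<le> 1"
  shows "loss ((1 - t) *\<^sub>R A + t *\<^sub>R B) e \<le> (1 - t) * loss A e + t * loss B e"
proof -
  obtain x y where e: "e = (x, y)" by force
  define a where "a = (\<lambda>(V::real^'d^'k) y'. (if y' \<noteq> y then 1 else 0) - (V *v x) $ y + (V *v x) $ y')"
  have "a ((1 - t) *\<^sub>R A + t *\<^sub>R B) y' = (1 - t) * a A y' + t * a B y'" for y'
    unfolding a_def mv_lin2 by (simp add: algebra_simps)
  then have "loss ((1 - t) *\<^sub>R A + t *\<^sub>R B) e = ln (\<Sum>y'\<in>UNIV. exp ((1 - t) * a A y' + t * a B y'))"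
    unfolding e loss_def a_def by simp
  also have "\<dots> \<le> (1 - t) * ln (\<Sum>y'\<in>UNIV. exp (a A y')) + t * ln (\<Sum>y'\<in>UNIV. exp (a B y'))"
    by (rule lse_convex) (use t in auto)
  also have "\<dots> = (1 - t) * loss A e + t * loss B e"
    unfolding e loss_def a_def by simp
  finally show ?thesis .
qed

lemma emp_convex:
  fixes A B :: "real^'d::finite^'k::finite"
  assumes t: "0 \<le> t" "t \<le> 1"
  shows "emp_loss S ((1 - t) *\<^sub>R A + t *\<^sub>R B) \<le> (1 - t) * emp_loss S A + t * emp_loss S B"
proof -
  have "(\<Sum>e\<in>#S. loss ((1 - t) *\<^sub>R A + t *\<^sub>R B) e) \<le> (\<Sum>e\<in>#S. (1 - t) * loss A e + t * loss B e)"
    by (intro sum_mset_mono loss_convex t)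
  also have "\<dots> = (1 - t) * (\<Sum>e\<in>#S. loss A e) + t * (\<Sum>e\<in>#S. loss B e)"
    by (induction S) (auto simp: algebra_simps)
  finally have "(\<Sum>e\<in>#S. loss ((1 - t) *\<^sub>R A + t *\<^sub>R B) e) / real (size S) \<le> ((1 - t) * (\<Sum>e\<in>#S. loss A e) + t * (\<Sum>e\<in>#S. loss B e)) / real (size S)"
    by (intro divide_right_mono) auto
  then show ?thesis unfolding emp_loss_def
    by (simp add: add_divide_distrib)
qed

lemma phi_convex:
  fixes W D :: "real^'d::finite^'k::finite"
  shows "convex_on UNIV (\<lambda>t. emp_loss S (W + t *\<^sub>R D))"
proof (rule convex_onI)
  fix t x y :: real assume t: "t > 0" "t < 1"
  have "W + ((1 - t) *\<^sub>R x + t *\<^sub>R y) *\<^sub>R D = (1 - t) *\<^sub>R (W + x *\<^sub>R D) + t *\<^sub>R (W + y *\<^sub>R D)"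
    by (simp add: algebra_simps)
  then show "emp_loss S (W + ((1 - t) *\<^sub>R x + t *\<^sub>R y) *\<^sub>R D)
     \<le> (1 - t) * emp_loss S (W + x *\<^sub>R D) + t * emp_loss S (W + y *\<^sub>R D)"
    using emp_convex[of t S "W + x *\<^sub>R D" "W + y *\<^sub>R D"] t by simp
qed auto

lemma dir_deriv:
  fixes f :: "'a::real_inner \<Rightarrow> real"
  assumes "GDERIV f W :> G"
  shows "DERIV (\<lambda>t. f (W + t *\<^sub>R D)) 0 :> inner G D"
proof -
  have 1: "((\<lambda>t. W + t *\<^sub>R D) has_derivative (\<lambda>t. t *\<^sub>R D)) (at 0)"
    by (auto intro!: derivative_eq_intros)
  have 2: "(f has_derivative (\<lambda>h. inner h G)) (at ((\<lambda>t. W + t *\<^sub>R D) 0))"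
    using assms by (simp add: gderiv_def)
  from has_derivative_compose[OF 1 2]
  have "((\<lambda>t. f (W + t *\<^sub>R D)) has_derivative (\<lambda>t. inner (t *\<^sub>R D) G)) (at 0)" .
  moreover have "(\<lambda>t. inner (t *\<^sub>R D) G) = (*) (inner G D)"
    by (auto simp: inner_commute)
  ultimately show ?thesis by (simp add: has_field_derivative_def)
qed

lemma lse_taylor:
  fixes c w :: "'i \<Rightarrow> real"
  assumes I: "finite I" "I \<noteq> {}" and w: "\<And>i. i \<in> I \<Longrightarrow> \<bar>w i - m\<bar> \<le> 1" and x: "x \<ge> 0"
  shows "ln (\<Sum>i\<in>I. exp (c i + x * w i))
         \<le> ln (\<Sum>i\<in>I. exp (c i)) + x * ((\<Sum>i\<in>I. exp (c i) * w i) / (\<Sum>i\<in>I. exp (c i))) + x\<^sup>2 / 2"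
proof (cases "x = 0")
  case True then show ?thesis by simp
next
  case False
  then have x0: "x > 0" using x by simp
  define Z where "Z = (\<lambda>s. \<Sum>i\<in>I. exp (c i + s * w i))"
  define Z1 where "Z1 = (\<lambda>s. \<Sum>i\<in>I. exp (c i + s * w i) * w i)"
  define Z2 where "Z2 = (\<lambda>s. \<Sum>i\<in>I. exp (c i + s * w i) * w i * w i)"
  have Zpos: "Z s > 0" for s unfolding Z_def using I by (intro sum_pos) auto
  have dZ: "DERIV Z s :> Z1 s" for s
    unfolding Z_def Z1_def by (rule DERIV_sum) (auto intro!: derivative_eq_intros)
  have dZ1: "DERIV Z1 s :> Z2 s" for s
    unfolding Z1_def Z2_def by (rule DERIV_sum) (auto intro!: derivative_eq_intros)
  define F where "F = (\<lambda>s. ln (Z s))"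
  define F1 where "F1 = (\<lambda>s. Z1 s / Z s)"
  define F2 where "F2 = (\<lambda>s. (Z2 s * Z s - Z1 s * Z1 s) / (Z s * Z s))"
  have dF: "DERIV F s :> F1 s" for s
  proof -
    have "DERIV F s :> 1 / Z s * Z1 s"
      unfolding F_def by (rule DERIV_chain2[OF DERIV_ln_divide[OF Zpos] dZ])
    then show ?thesis by (simp add: F1_def)
  qed
  have dF1: "DERIV F1 s :> F2 s" for s
    unfolding F1_def F2_def using DERIV_divide[OF dZ1 dZ] Zpos[of s] by simp
  have F2le: "F2 s \<le> 1" for s
  proof -
    define V where "V = (\<Sum>i\<in>I. exp (c i + s * w i) * (w i - m)\<^sup>2)"
    have V: "V = Z2 s - 2 * m * Z1 s + m\<^sup>2 * Z s"
      unfolding V_def Z_def Z1_def Z2_def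
      by (simp add: power2_eq_square algebra_simps sum.distrib sum_distrib_left sum_subtractf)
    have "V \<le> (\<Sum>i\<in>I. exp (c i + s * w i) * 1)"
      unfolding V_def
    proof (intro sum_mono mult_left_mono)
      fix i assume "i \<in> I"
      then have "\<bar>w i - m\<bar> \<le> 1" by (rule w)
      then show "(w i - m)\<^sup>2 \<le> 1" by (simp add: abs_square_le_1)
    qed auto
    then have VZ: "V \<le> Z s" unfolding Z_def by simp
    have "Z2 s * Z s - Z1 s * Z1 s \<le> Z s * V"
    proof -
      have "Z s * V - (Z2 s * Z s - Z1 s * Z1 s) = (Z1 s - m * Z s)\<^sup>2"
        unfolding V by (simp add: power2_eq_square algebra_simps)
      then show ?thesis by (smt (verit) zero_le_power2)
    qed
    also have "\<dots> \<le> Z s * Z s" using VZ Zpos[of s] by (intro mult_left_mono) auto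
    finally show ?thesis unfolding F2_def using Zpos[of s] by (simp add: divide_le_eq_1)
  qed
  define Ls where "Ls = (\<lambda>n. [F, F1, F2] ! n)"
  have diff: "\<forall>m t. m < 2 \<and> 0 \<le> t \<and> t \<le> x \<longrightarrow> DERIV (Ls m) t :> Ls (Suc m) t"
    using dF dF1 by (auto simp: Ls_def nth_Cons split: nat.splits)
  from Taylor[of 2 Ls F 0 x 0 x, OF _ _ diff] x0
  obtain t where t: "F x = (\<Sum>m<2. Ls m 0 / fact m * (x - 0) ^ m) + Ls 2 t / fact 2 * (x - 0)\<^sup>2"
    by (auto simp: Ls_def)
  then have "F x = F 0 + F1 0 * x + F2 t / 2 * x\<^sup>2"
    by (simp add: Ls_def lessThan_nat_numeral)
  also have "\<dots> \<le> F 0 + F1 0 * x + 1 / 2 * x\<^sup>2"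
    using F2le[of t] by (intro add_left_mono mult_right_mono divide_right_mono) auto
  finally show ?thesis
    by (simp add: F_def F1_def Z_def Z1_def mult.commute)
qed

lemma lse_deriv:
  fixes c w :: "'i \<Rightarrow> real"
  assumes I: "finite I" "I \<noteq> {}"
  shows "DERIV (\<lambda>t. ln (\<Sum>i\<in>I. exp (c i + t * w i))) 0 :> (\<Sum>i\<in>I. exp (c i) * w i) / (\<Sum>i\<in>I. exp (c i))"
proof -
  have Zpos: "(\<Sum>i\<in>I. exp (c i + 0 * w i)) > 0" using I by (intro sum_pos) auto
  have dZ: "DERIV (\<lambda>t. \<Sum>i\<in>I. exp (c i + t * w i)) 0 :> (\<Sum>i\<in>I. exp (c i + 0 * w i) * w i)"
    by (rule DERIV_sum) (auto intro!: derivative_eq_intros)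
  have "DERIV (\<lambda>t. ln (\<Sum>i\<in>I. exp (c i + t * w i))) 0 :> 1 / (\<Sum>i\<in>I. exp (c i + 0 * w i)) * (\<Sum>i\<in>I. exp (c i + 0 * w i) * w i)"
    by (rule DERIV_chain2[OF DERIV_ln_divide[OF Zpos] dZ])
  then show ?thesis by simp
qed

lemma outer_mv: "(outer_e s j *v x) $ r = s $ r * x $ j"
proof -
  have "\<And>i. (if i = j then s $ r else 0) * x $ i = (if i = j then s $ r * x $ j else 0)" by auto
  then have "(\<Sum>i\<in>UNIV. (if i = j then s $ r else 0) * x $ i) = s $ r * x $ j"
    by simp
  then show ?thesis by (simp add: matrix_vector_mult_def outer_e_def)
qed

lemma loss_dir:
  fixes W :: "real^'d::finite^'k::finite"
  shows "loss (W + t *\<^sub>R outer_e s j) (x, y) =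
    ln (\<Sum>y'\<in>UNIV. exp (((if y' \<noteq> y then 1 else 0) - (W *v x) $ y + (W *v x) $ y') + t * (x $ j * s $ y' - x $ j * s $ y)))"
proof -
  have "W + t *\<^sub>R outer_e s j = 1 *\<^sub>R W + t *\<^sub>R outer_e s j" by simp
  then have mv: "((W + t *\<^sub>R outer_e s j) *v x) $ r = (W *v x) $ r + t * (s $ r * x $ j)" for r
    by (simp only: mv_lin2 outer_mv)
  show ?thesis unfolding loss_def prod.case mv by (simp add: algebra_simps)
qed

definition dd :: "real^'d::finite^'k::finite \<Rightarrow> real^'k \<Rightarrow> 'd \<Rightarrow> (real^'d) \<times> 'k \<Rightarrow> real" where
  "dd W s j e = (case e of (x, y) \<Rightarrow>
     (\<Sum>y'\<in>UNIV. exp ((if y' \<noteq> y then 1 else 0) - (W *v x) $ y + (W *v x) $ y') * (x $ j * s $ y' - x $ j * s $ y))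
     / (\<Sum>y'\<in>UNIV. exp ((if y' \<noteq> y then 1 else 0) - (W *v x) $ y + (W *v x) $ y')))"

lemma loss_dir_deriv:
  fixes W :: "real^'d::finite^'k::finite"
  shows "DERIV (\<lambda>t. loss (W + t *\<^sub>R outer_e s j) e) 0 :> dd W s j e"
proof -
  obtain x y where e: "e = (x, y)" by force
  show ?thesis unfolding e loss_dir dd_def by (simp add: lse_deriv)
qed

lemma loss_dir_bound:
  fixes W :: "real^'d::finite^'k::finite"
  assumes "\<bar>fst e $ j\<bar> \<le> 1" "\<And>r. \<bar>s $ r\<bar> \<le> 1" "t \<ge> 0"
  shows "loss (W + t *\<^sub>R outer_e s j) e \<le> loss W e + t * dd W s j e + t\<^sup>2 / 2"
proof -
  obtain x y where e: "e = (x, y)" by force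
  have xj: "\<bar>x $ j\<bar> \<le> 1" using assms(1) e by simp
  have w: "\<bar>(x $ j * s $ y' - x $ j * s $ y) - (- (x $ j * s $ y))\<bar> \<le> 1" for y'
    using xj assms(2)[of y'] by (simp add: abs_mult mult_le_one)
  have "loss (W + t *\<^sub>R outer_e s j) e \<le> ln (\<Sum>y'\<in>UNIV. exp ((if y' \<noteq> y then 1 else 0) - (W *v x) $ y + (W *v x) $ y')) + t * dd W s j e + t\<^sup>2 / 2"
    unfolding e loss_dir dd_def
    by (simp only: prod.case) (rule lse_taylor[OF _ _ w assms(3)], auto)
  also have "ln (\<Sum>y'\<in>UNIV. exp ((if y' \<noteq> y then 1 else 0) - (W *v x) $ y + (W *v x) $ y')) = loss W e"
    unfolding e loss_def by simp
  finally show ?thesis .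
qed

lemma DERIV_sum_mset:
  assumes "\<And>e. e \<in># S \<Longrightarrow> DERIV (\<lambda>t. f e t) x :> d e"
  shows "DERIV (\<lambda>t. \<Sum>e\<in>#S. f e t) x :> (\<Sum>e\<in>#S. d e)"
  using assms
proof (induction S)
  case empty then show ?case by simp
next
  case (add a S) then show ?case by (auto intro!: derivative_eq_intros)
qed

lemma loss_nonneg: "loss (V::real^'d::finite^'k::finite) e \<ge> 0"
proof -
  obtain x y where e: "e = (x, y)" by force
  have "exp ((if y \<noteq> y then 1 else 0) - (V *v x) $ y + (V *v x) $ y) \<le> (\<Sum>y'\<in>UNIV. exp ((if y' \<noteq> y then 1 else 0) - (V *v x) $ y + (V *v x) $ y'))"
    by (rule member_le_sum) auto
  then have "1 \<le> (\<Sum>y'\<in>UNIV. exp ((if y' \<noteq> y then 1 else 0) - (V *v x) $ y + (V *v x) $ y'))" by simp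
  then show ?thesis unfolding e loss_def by simp
qed

lemma emp_nonneg: "emp_loss S (V::real^'d::finite^'k::finite) \<ge> 0"
proof -
  have "(\<Sum>e\<in>#S. (0::real)) \<le> (\<Sum>e\<in>#S. loss V e)" by (intro sum_mset_mono loss_nonneg)
  then show ?thesis unfolding emp_loss_def by simp
qed

lemma not_supp: "i \<notin> supp V \<Longrightarrow> V $ r $ i = 0"
  unfolding supp_def col_def by (auto simp: vec_eq_iff)

lemma norminf_ge: "\<bar>V $ r $ i\<bar> \<le> norminf (col V i)"
  unfolding norminf_def col_def by (rule Max_ge) auto

lemma norminf_nonneg: "norminf (col V i) \<ge> 0"
  using norminf_ge[of V _ i] abs_ge_zero order_trans by blast

lemma inner_outer: "inner (G::real^'d::finite^'k::finite) (outer_e s j) = (\<Sum>r\<in>UNIV. G $ r $ j * s $ r)"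
proof -
  have "\<And>r i. G $ r $ i * (if i = j then s $ r else 0) = (if i = j then G $ r $ j * s $ r else 0)" by auto
  then show ?thesis by (simp add: inner_vec_def outer_e_def)
qed

lemma outer_scale: "outer_e (c *\<^sub>R s) j = c *\<^sub>R outer_e s j"
  by (simp add: outer_e_def vec_eq_iff)

theorem lemmaA3:
  fixes S :: "((real^'d::finite) \<times> 'k::finite) multiset"
    and F Fbar :: "'d set"
    and W Wstar :: "real^'d^'k"
    and j :: 'd
  assumes S_box: "\<forall>(x, y) \<in> set_mset S. \<forall>i. \<bar>x $ i\<bar> \<le> 1"
    and Fdiff: "Fbar - F \<noteq> {}"
    and W_min: "supp W \<subseteq> F" "\<forall>V. supp V \<subseteq> F \<longrightarrow> emp_loss S W \<le> emp_loss S V"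
    and Wstar_min: "supp Wstar \<subseteq> Fbar" "\<forall>V. supp V \<subseteq> Fbar \<longrightarrow> emp_loss S Wstar \<le> emp_loss S V"
    and j_max: "\<forall>i. norm1 (col (grad (emp_loss S) W) i) \<le> norm1 (col (grad (emp_loss S) W) j)"
    and gap: "emp_loss S W > emp_loss S Wstar"
  shows "emp_loss S W - (INF u. emp_loss S (W + outer_e u j))
           \<ge> (emp_loss S W - emp_loss S Wstar)^2
              / (4 * (\<Sum>i\<in>Fbar - F. norminf (col Wstar i))^2)"
proof -
  obtain G where G: "GDERIV (emp_loss S) W :> G" using emp_gderiv by blast
  have gradG: "grad (emp_loss S) W = G" using grad_eq[OF G] .
  define g where "g = norm1 (col G j)"
  define R where "R = (\<Sum>i\<in>Fbar - F. norminf (col Wstar i))"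
  have gi: "norm1 (col G i) \<le> g" for i using j_max gradG g_def by simp
  have Snz: "size S > 0"
  proof (rule ccontr)
    assume "\<not> size S > 0"
    then have "size S = 0" by simp
    then show False using gap by (simp add: emp_loss_def)
  qed
  have W0: "i \<notin> F \<Longrightarrow> W $ r $ i = 0" for i r using W_min(1) not_supp by blast
  have Ws0: "i \<notin> Fbar \<Longrightarrow> Wstar $ r $ i = 0" for i r using Wstar_min(1) not_supp by blast
  define P where "P = (\<chi> r i. if i \<in> F then Wstar $ r $ i - W $ r $ i else 0)"
  have suppP: "supp (W + t *\<^sub>R P) \<subseteq> F" for t
  proof
    fix i assume "i \<in> supp (W + t *\<^sub>R P)"
    moreover have "i \<notin> F \<Longrightarrow> col (W + t *\<^sub>R P) i = 0"
      using W0 by (simp add: col_def P_def vec_eq_iff)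
    ultimately show "i \<in> F" unfolding supp_def by blast
  qed
  have GP: "inner G P = 0"
  proof (rule DERIV_local_min[OF dir_deriv[OF G, of P], of 1])
    show "\<forall>y. \<bar>0 - y\<bar> < 1 \<longrightarrow> emp_loss S (W + 0 *\<^sub>R P) \<le> emp_loss S (W + y *\<^sub>R P)"
      using W_min(2) suppP by simp
  qed simp
  define Dl where "Dl = Wstar - W"
  have tang: "emp_loss S (W + 1 *\<^sub>R Dl) - emp_loss S (W + 0 *\<^sub>R Dl) \<ge> inner G Dl * (1 - 0)"
    by (rule convex_on_imp_above_tangent[OF phi_convex]) (use dir_deriv[OF G, of Dl] in auto)
  then have tang': "emp_loss S W - emp_loss S Wstar \<le> - inner G Dl" unfolding Dl_def by simp
  have pw: "G $ r $ i * Dl $ r $ i = G $ r $ i * P $ r $ i + (if i \<in> Fbar - F then G $ r $ i * Wstar $ r $ i else 0)" for r i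
    using W0[of i r] Ws0[of i r] by (auto simp: Dl_def P_def)
  have "inner G Dl = inner G P + (\<Sum>r\<in>UNIV. \<Sum>i\<in>UNIV. if i \<in> Fbar - F then G $ r $ i * Wstar $ r $ i else 0)"
    unfolding inner_vec_def inner_real_def pw by (simp add: sum.distrib)
  also have "\<dots> = inner G P + (\<Sum>r\<in>UNIV. \<Sum>i\<in>Fbar - F. G $ r $ i * Wstar $ r $ i)"
    by (simp add: sum.If_cases set_diff_eq)
  also have "\<dots> = (\<Sum>i\<in>Fbar - F. \<Sum>r\<in>UNIV. G $ r $ i * Wstar $ r $ i)"
    using GP by (simp only: add_0_left) (rule sum.swap)
  finally have GDl: "inner G Dl = (\<Sum>i\<in>Fbar - F. \<Sum>r\<in>UNIV. G $ r $ i * Wstar $ r $ i)" .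
  have "- inner G Dl \<le> (\<Sum>i\<in>Fbar - F. \<Sum>r\<in>UNIV. \<bar>G $ r $ i\<bar> * norminf (col Wstar i))"
  proof -
    have "- inner G Dl = (\<Sum>i\<in>Fbar - F. \<Sum>r\<in>UNIV. - (G $ r $ i * Wstar $ r $ i))"
      unfolding GDl by (simp add: sum_negf)
    also have "\<dots> \<le> (\<Sum>i\<in>Fbar - F. \<Sum>r\<in>UNIV. \<bar>G $ r $ i\<bar> * norminf (col Wstar i))"
    proof (intro sum_mono)
      fix i r
      have "- (G $ r $ i * Wstar $ r $ i) \<le> \<bar>G $ r $ i\<bar> * \<bar>Wstar $ r $ i\<bar>" by (simp add: abs_mult[symmetric])
      also have "\<dots> \<le> \<bar>G $ r $ i\<bar> * norminf (col Wstar i)" by (intro mult_left_mono norminf_ge) auto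
      finally show "- (G $ r $ i * Wstar $ r $ i) \<le> \<bar>G $ r $ i\<bar> * norminf (col Wstar i)" .
    qed
    finally show ?thesis .
  qed
  also have "\<dots> = (\<Sum>i\<in>Fbar - F. norm1 (col G i) * norminf (col Wstar i))"
    by (simp add: norm1_def col_def sum_distrib_right)
  also have "\<dots> \<le> (\<Sum>i\<in>Fbar - F. g * norminf (col Wstar i))"
    by (intro sum_mono mult_right_mono gi norminf_nonneg)
  also have "\<dots> = g * R" by (simp add: R_def sum_distrib_left)
  finally have gapR: "emp_loss S W - emp_loss S Wstar \<le> g * R" using tang' by linarith
  have R0: "R \<ge> 0" unfolding R_def by (intro sum_nonneg norminf_nonneg)
  have g0: "g \<ge> 0" unfolding g_def norm1_def by (intro sum_nonneg) auto
  define s where "s = (\<chi> r. - sgn (G $ r $ j))"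
  have s1: "\<bar>s $ r\<bar> \<le> 1" for r by (simp add: s_def abs_sgn_eq)
  have Gs: "inner G (outer_e s j) = - g"
  proof -
    have "\<And>r. G $ r $ j * s $ r = - \<bar>G $ r $ j\<bar>" by (simp add: s_def abs_sgn)
    then show ?thesis by (simp add: inner_outer g_def norm1_def col_def sum_negf)
  qed
  let ?n = "real (size S)"
  have d1: "DERIV (\<lambda>t. emp_loss S (W + t *\<^sub>R outer_e s j)) 0 :> (\<Sum>e\<in>#S. dd W s j e) / ?n"
    unfolding emp_loss_def by (intro DERIV_cdivide DERIV_sum_mset loss_dir_deriv)
  have dsum: "(\<Sum>e\<in>#S. dd W s j e) / ?n = - g"
    using DERIV_unique[OF d1 dir_deriv[OF G, of "outer_e s j"]] Gs by simp
  have "(\<Sum>e\<in>#S. loss (W + g *\<^sub>R outer_e s j) e) \<le> (\<Sum>e\<in>#S. loss W e + g * dd W s j e + g\<^sup>2 / 2)"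
  proof (intro sum_mset_mono loss_dir_bound s1 g0)
    fix e assume "e \<in># S"
    then show "\<bar>fst e $ j\<bar> \<le> 1" using S_box by auto
  qed
  also have "\<dots> = (\<Sum>e\<in>#S. loss W e) + g * (\<Sum>e\<in>#S. dd W s j e) + ?n * (g\<^sup>2 / 2)"
    by (induction S) (auto simp: algebra_simps)
  finally have "emp_loss S (W + g *\<^sub>R outer_e s j) \<le> ((\<Sum>e\<in>#S. loss W e) + g * (\<Sum>e\<in>#S. dd W s j e) + ?n * (g\<^sup>2 / 2)) / ?n"
    unfolding emp_loss_def by (intro divide_right_mono) auto
  also have "\<dots> = emp_loss S W + g * ((\<Sum>e\<in>#S. dd W s j e) / ?n) + g\<^sup>2 / 2"
  proof -
    have hn: "?n \<noteq> 0" using Snz by (simp del: size_eq_0_iff_empty)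
    then show ?thesis unfolding emp_loss_def by (simp add: add_divide_distrib)
  qed
  also have "\<dots> = emp_loss S W - g\<^sup>2 / 2"
    unfolding dsum by (simp add: power2_eq_square)
  finally have desc: "emp_loss S (W + g *\<^sub>R outer_e s j) \<le> emp_loss S W - g\<^sup>2 / 2" .
  have "(INF u. emp_loss S (W + outer_e u j)) \<le> emp_loss S (W + outer_e (g *\<^sub>R s) j)"
    by (rule cINF_lower) (auto intro: bdd_belowI[where m = 0] emp_nonneg)
  with desc have inf: "emp_loss S W - (INF u. emp_loss S (W + outer_e u j)) \<ge> g\<^sup>2 / 2"
    by (simp add: outer_scale)
  define \<delta> where "\<delta> = emp_loss S W - emp_loss S Wstar"
  have d0: "\<delta> > 0" using gap \<delta>_def by simp
  have "g * R > 0" using gapR d0 \<delta>_def by linarith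
  then have Rp: "R > 0" using R0 g0 by (metis less_eq_real_def mult_zero_right)
  have "\<delta>\<^sup>2 \<le> (g * R)\<^sup>2" using gapR d0 \<delta>_def by (intro power_mono) auto
  then have "\<delta>\<^sup>2 / (4 * R\<^sup>2) \<le> (g * R)\<^sup>2 / (4 * R\<^sup>2)" by (intro divide_right_mono) auto
  also have "\<dots> = g\<^sup>2 / 4" using Rp by (simp add: power_mult_distrib)
  also have "\<dots> \<le> g\<^sup>2 / 2" by simp
  finally show ?thesis using inf unfolding \<delta>_def R_def by linarith
qed

end
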